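(* Let $(X,d)$ be a geodesic metric space whose metric is convex, and let $(A,B)$ be a pair of compact convex subsets of $X$. Then $(A,B)$ has proximal normal structure.
   Context: A geodesic space is one in which any two points are joined by a geodesic segment; a subset is convex if it contains every geodesic segment joining two of its points. For $t\in[0,1]$, $(1-t)y+tz$ denotes a point on a geodesic segment from $y$ to $z$ at distance $t\,d(y,z)$ from $y$. The metric is convex if $d(x,(1-t)y+tz)\le(1-t)d(x,y)+t\,d(x,z)$ for all $x,y,z\in X$, $t\in[0,1]$ (and all such points). Notation: $\operatorname{dist}(A,B)=\inf\{d(x,y):x\in A,y\in B\}$, $\delta(x,A)=\sup\{d(x,y):y\in A\}$, $\delta(A,B)=\sup\{d(x,y):x\in A,y\in B\}$. A pair $(H_1,H_2)$ is proximal if for every $(a,b)\in H_1\times H_2$ there is $(a',b')\in H_1\times H_2$ with $d(a,b')=d(a',b)=\operatorname{dist}(H_1,H_2)$. A convex pair $(K_1,K_2)$ has proximal normal structure if for every closed bounded convex proximal pair $(H_1,H_2)$ with $H_1\subseteq K_1$, $H_2\subseteq K_2$, $\operatorname{dist}(H_1,H_2)=\operatorname{dist}(K_1,K_2)$ and $\delta(H_1,H_2)>\operatorname{dist}(H_1,H_2)$, there exists $(x_1,x_2)\in H_1\times H_2$ with $\delta(x_1,H_2)<\delta(H_1,H_2)$ and $\delta(x_2,H_1)<\delta(H_1,H_2)$. *)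

theory Defs
  imports "HOL-Analysis.Analysis"
begin

definition geodesic_segment :: "'a::metric_space \<Rightarrow> 'a \<Rightarrow> 'a set \<Rightarrow> bool" where
  "geodesic_segment x y S \<longleftrightarrow>
     (\<exists>g::real \<Rightarrow> 'a. g 0 = x \<and> g (dist x y) = y \<and>
        (\<forall>s\<in>{0..dist x y}. \<forall>t\<in>{0..dist x y}. dist (g s) (g t) = \<bar>s - t\<bar>) \<and>
        S = g ` {0..dist x y})"

definition geodesic_space :: "'a::metric_space itself \<Rightarrow> bool" where
  "geodesic_space _ \<longleftrightarrow> (\<forall>x y::'a. \<exists>S. geodesic_segment x y S)"

definition geo_convex :: "'a::metric_space set \<Rightarrow> bool" where
  "geo_convex A \<longleftrightarrow> (\<forall>y\<in>A. \<forall>z\<in>A. \<forall>S. geodesic_segment y z S \<longrightarrow> S \<subseteq> A)"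

definition convex_metric :: "'a::metric_space itself \<Rightarrow> bool" where
  "convex_metric _ \<longleftrightarrow>
     (\<forall>x y z::'a. \<forall>t::real. \<forall>S p. t \<in> {0..1} \<and> geodesic_segment y z S \<and> p \<in> S \<and>
        dist y p = t * dist y z \<longrightarrow> dist x p \<le> (1 - t) * dist x y + t * dist x z)"

definition delta_pt :: "'a::metric_space \<Rightarrow> 'a set \<Rightarrow> real" where
  "delta_pt x A = Sup {dist x y | y. y \<in> A}"

definition delta_sets :: "'a::metric_space set \<Rightarrow> 'a set \<Rightarrow> real" where
  "delta_sets A B = Sup {dist x y | x y. x \<in> A \<and> y \<in> B}"

definition proximal_pair :: "'a::metric_space set \<Rightarrow> 'a set \<Rightarrow> bool" where
  "proximal_pair H1 H2 \<longleftrightarrow>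
     (\<forall>a\<in>H1. \<forall>b\<in>H2. \<exists>a'\<in>H1. \<exists>b'\<in>H2.
        dist a b' = setdist H1 H2 \<and> dist a' b = setdist H1 H2)"

definition proximal_normal_structure :: "'a::metric_space set \<Rightarrow> 'a set \<Rightarrow> bool" where
  "proximal_normal_structure K1 K2 \<longleftrightarrow>
     (\<forall>H1 H2. H1 \<noteq> {} \<and> H2 \<noteq> {} \<and> closed H1 \<and> closed H2 \<and> bounded H1 \<and> bounded H2 \<and>
        geo_convex H1 \<and> geo_convex H2 \<and> proximal_pair H1 H2 \<and> H1 \<subseteq> K1 \<and> H2 \<subseteq> K2 \<and>
        setdist H1 H2 = setdist K1 K2 \<and> delta_sets H1 H2 > setdist H1 H2 \<longrightarrow>
        (\<exists>x1\<in>H1. \<exists>x2\<in>H2. delta_pt x1 H2 < delta_sets H1 H2 \<and> delta_pt x2 H1 < delta_sets H1 H2))"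

end

theory Submission
  imports Defs
begin

lemma midpoint_ex:
  fixes c x :: "'a::metric_space"
  assumes geo: "geodesic_space TYPE('a)" and cm: "convex_metric TYPE('a)"
    and cv: "geo_convex H" and c: "c \<in> H" and x: "x \<in> H"
  shows "\<exists>p\<in>H. \<forall>y. dist y p \<le> dist y c / 2 + dist y x / 2"
proof -
  obtain S where S: "geodesic_segment c x S" using geo unfolding geodesic_space_def by blast
  then obtain g where g0: "g 0 = c" and g1: "g (dist c x) = x"
    and iso: "\<forall>s\<in>{0..dist c x}. \<forall>t\<in>{0..dist c x}. dist (g s) (g t) = \<bar>s - t\<bar>"
    and SS: "S = g ` {0..dist c x}"
    unfolding geodesic_segment_def by blast
  define p where "p = g (dist c x / 2)"
  have pS: "p \<in> S" unfolding p_def SS by auto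
  have "S \<subseteq> H" using cv c x S unfolding geo_convex_def by blast
  with pS have pH: "p \<in> H" by blast
  have dcp: "dist c p = (1/2) * dist c x"
    using iso[rule_format, of 0 "dist c x / 2"] g0 unfolding p_def by auto
  have "\<forall>y. dist y p \<le> dist y c / 2 + dist y x / 2"
  proof
    fix y
    have "dist y p \<le> (1 - 1/2) * dist y c + (1/2) * dist y x"
      using cm pS S dcp unfolding convex_metric_def
      by (elim allE[of _ y] allE[of _ c] allE[of _ x] allE[of _ "1/2"] allE[of _ S] allE[of _ p]) auto
    then show "dist y p \<le> dist y c / 2 + dist y x / 2" by simp
  qed
  with pH show ?thesis by blast
qed

lemma key:
  fixes H1 H2 :: "'a::metric_space set"
  assumes geo: "geodesic_space TYPE('a)" and cm: "convex_metric TYPE('a)"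
    and c1: "compact H1" and c2: "compact H2" and ne1: "H1 \<noteq> {}" and ne2: "H2 \<noteq> {}"
    and cv: "geo_convex H1"
    and prox: "\<forall>b\<in>H2. \<exists>a\<in>H1. dist a b < delta_sets H1 H2"
  shows "\<exists>x\<in>H1. delta_pt x H2 < delta_sets H1 H2"
proof (rule ccontr)
  define D where "D = delta_sets H1 H2"
  assume "\<not> ?thesis"
  hence nd: "\<And>x. x \<in> H1 \<Longrightarrow> D \<le> delta_pt x H2" unfolding D_def by force
  obtain a0 where a0: "a0 \<in> H1" using ne1 by blast
  obtain e1 where e1: "\<forall>x\<in>H1. dist a0 x \<le> e1"
    using compact_imp_bounded[OF c1] bounded_any_center by blast
  obtain e2 where e2: "\<forall>x\<in>H2. dist a0 x \<le> e2"
    using compact_imp_bounded[OF c2] bounded_any_center by blast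
  have bdd: "bdd_above {dist x y | x y. x \<in> H1 \<and> y \<in> H2}"
  proof (rule bdd_aboveI)
    fix z assume "z \<in> {dist x y | x y. x \<in> H1 \<and> y \<in> H2}"
    then obtain x y where z: "z = dist x y" "x \<in> H1" "y \<in> H2" by blast
    have "dist x y \<le> dist a0 x + dist a0 y" by (metis dist_commute dist_triangle)
    then show "z \<le> e1 + e2" using z e1 e2 by force
  qed
  have leD: "\<And>x y. x \<in> H1 \<Longrightarrow> y \<in> H2 \<Longrightarrow> dist x y \<le> D"
    unfolding D_def delta_sets_def by (rule cSup_upper[OF _ bdd]) blast
  have att: "\<exists>y\<in>H2. D \<le> dist x y" if x: "x \<in> H1" for x
  proof -
    have "continuous_on H2 (\<lambda>y. dist x y)" by (intro continuous_intros)
    then obtain y where y: "y \<in> H2" "\<forall>z\<in>H2. dist x z \<le> dist x y"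
      using continuous_attains_sup[OF c2 ne2] by blast
    have "delta_pt x H2 \<le> dist x y" unfolding delta_pt_def
      by (rule cSup_least) (use y ne2 in auto)
    with nd[OF x] y show ?thesis by force
  qed
  have ind: "finite F \<Longrightarrow> F \<subseteq> H1 \<Longrightarrow>
      \<exists>c\<in>H1. \<forall>y\<in>H2. D \<le> dist c y \<longrightarrow> (\<forall>x\<in>F. D \<le> dist x y)" for F
  proof (induction F rule: finite_induct)
    case empty then show ?case using a0 by blast
  next
    case (insert x F)
    then obtain c where c: "c \<in> H1" "\<forall>y\<in>H2. D \<le> dist c y \<longrightarrow> (\<forall>x\<in>F. D \<le> dist x y)"
      by blast
    have xH: "x \<in> H1" using insert by blast
    obtain p where p: "p \<in> H1" "\<forall>y. dist y p \<le> dist y c / 2 + dist y x / 2"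
      using midpoint_ex[OF geo cm cv c(1) xH] by blast
    have "\<forall>y\<in>H2. D \<le> dist p y \<longrightarrow> (\<forall>z\<in>insert x F. D \<le> dist z y)"
    proof (intro ballI impI)
      fix y z assume y: "y \<in> H2" and Dp: "D \<le> dist p y" and z: "z \<in> insert x F"
      have "dist y p \<le> dist y c / 2 + dist y x / 2" using p by blast
      moreover have "dist c y \<le> D" "dist x y \<le> D" using leD c(1) xH y by auto
      ultimately have "D \<le> dist c y" "D \<le> dist x y" using Dp by (auto simp: dist_commute)
      with c(2) y z show "D \<le> dist z y" by blast
    qed
    with p show ?case by blast
  qed
  define Fam where "Fam = (\<lambda>x. {y. D \<le> dist x y}) ` H1"
  have "H2 \<inter> \<Inter>Fam \<noteq> {}"
  proof (rule compact_imp_fip[OF c2])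
    fix T assume "T \<in> Fam"
    then obtain x where "T = {y. D \<le> dist x y}" unfolding Fam_def by blast
    then show "closed T" by (simp add: closed_Collect_le continuous_on_const continuous_intros)
  next
    fix F' assume F': "finite F'" "F' \<subseteq> Fam"
    then obtain F where F: "F \<subseteq> H1" "finite F" "F' = (\<lambda>x. {y. D \<le> dist x y}) ` F"
      unfolding Fam_def using finite_subset_image by metis
    obtain c where c: "c \<in> H1" "\<forall>y\<in>H2. D \<le> dist c y \<longrightarrow> (\<forall>x\<in>F. D \<le> dist x y)"
      using ind[OF F(2) F(1)] by blast
    obtain y where y: "y \<in> H2" "D \<le> dist c y" using att[OF c(1)] by blast
    have "y \<in> H2 \<inter> \<Inter>F'" using c(2) y F(3) by auto
    then show "H2 \<inter> \<Inter>F' \<noteq> {}" by blast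
  qed
  then obtain y where y: "y \<in> H2" "\<forall>x\<in>H1. D \<le> dist x y" unfolding Fam_def by auto
  obtain a where "a \<in> H1" "dist a y < D" using prox y(1) unfolding D_def by blast
  with y show False by force
qed

lemma delta_sets_sym: "delta_sets H1 H2 = delta_sets H2 H1"
proof -
  have "{dist x y | x y. x \<in> H1 \<and> y \<in> H2} = {dist x y | x y. x \<in> H2 \<and> y \<in> H1}"
    by (auto simp: dist_commute) (metis dist_commute)+
  then show ?thesis unfolding delta_sets_def by simp
qed

theorem mainTheorem8:
  fixes A B :: "'a::metric_space set"
  assumes "geodesic_space TYPE('a)"
    and "convex_metric TYPE('a)"
    and "compact A" and "compact B"
    and "geo_convex A" and "geo_convex B"
  shows "proximal_normal_structure A B"
  unfolding proximal_normal_structure_def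
proof (intro allI impI)
  fix H1 H2 :: "'a set"
  assume h: "H1 \<noteq> {} \<and> H2 \<noteq> {} \<and> closed H1 \<and> closed H2 \<and> bounded H1 \<and> bounded H2 \<and>
        geo_convex H1 \<and> geo_convex H2 \<and> proximal_pair H1 H2 \<and> H1 \<subseteq> A \<and> H2 \<subseteq> B \<and>
        setdist H1 H2 = setdist A B \<and> delta_sets H1 H2 > setdist H1 H2"
  have c1: "compact H1" using compact_Int_closed[OF assms(3), of H1] h by (simp add: Int_absorb1)
  have c2: "compact H2" using compact_Int_closed[OF assms(4), of H2] h by (simp add: Int_absorb1)
  obtain a0 where a0: "a0 \<in> H1" using h by blast
  obtain b0 where b0: "b0 \<in> H2" using h by blast
  have p1: "\<forall>b\<in>H2. \<exists>a\<in>H1. dist a b < delta_sets H1 H2"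
    using h a0 unfolding proximal_pair_def by fastforce
  have p2: "\<forall>b\<in>H1. \<exists>a\<in>H2. dist a b < delta_sets H2 H1"
    using h b0 unfolding proximal_pair_def delta_sets_sym[of H2 H1]
    by (metis dist_commute)
  obtain x1 where "x1 \<in> H1" "delta_pt x1 H2 < delta_sets H1 H2"
    using key[OF assms(1,2) c1 c2 _ _ _ p1] h by blast
  moreover obtain x2 where "x2 \<in> H2" "delta_pt x2 H1 < delta_sets H2 H1"
    using key[OF assms(1,2) c2 c1 _ _ _ p2] h by blast
  ultimately show "\<exists>x1\<in>H1. \<exists>x2\<in>H2. delta_pt x1 H2 < delta_sets H1 H2 \<and>
      delta_pt x2 H1 < delta_sets H1 H2"
    using delta_sets_sym[of H1 H2] by metis
qed

end
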